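(* For every positive integer $T$ divisible by $4$, \[\sum_{t=1}^{T/4}\big(T-4(t-1)\big)\binom{T+1}{2t-1}=2^{T-1}+\frac T2\binom{T}{T/2}.\] *)

theory Defs
  imports Main
begin

end

theory Submission
  imports Defs
begin

lemma term_id:
  fixes n s :: nat
  shows "(int n - 4 * int s) * int (Suc n choose Suc (2*s))
    = int (n choose Suc (2*s)) + int (n choose (2*s))
      + (int n + 1) * (int (n choose Suc (2*s)) - int (n choose (2*s)))"
proof -
  define X where "X = int (Suc n choose Suc (2*s))"
  define Y where "Y = int (n choose (2*s))"
  define Z where "Z = int (n choose Suc (2*s))"
  have a: "Suc (2*s) * (Suc n choose Suc (2*s)) = Suc n * (n choose (2*s))"
    by (rule Suc_times_binomial)
  have b: "(Suc n - Suc (2*s)) * (Suc n choose Suc (2*s)) = Suc n * (n choose Suc (2*s))"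
    using binomial_absorb_comp[of "Suc n" "Suc (2*s)"] by simp
  have c: "X = Y + Z" unfolding X_def Y_def Z_def by simp
  have a': "(2 * int s + 1) * X = (int n + 1) * Y"
    unfolding X_def Y_def using arg_cong[OF a, of int]
    by (simp del: binomial_Suc_Suc add: algebra_simps)
  have e: "(int n - 4 * int s) * X = (int n - 2 * int s) * X - (2 * int s + 1) * X + X"
    by (simp add: algebra_simps)
  show ?thesis
  proof (cases "Suc (2*s) \<le> Suc n")
    case True
    have b': "(int n - 2 * int s) * X = (int n + 1) * Z"
      unfolding X_def Z_def using arg_cong[OF b, of int] True
      by (simp del: binomial_Suc_Suc add: of_nat_diff algebra_simps)
    have "(int n - 4 * int s) * X = Z + Y + (int n + 1) * (Z - Y)"
    proof -
      have "(int n - 4 * int s) * X = (int n + 1) * Z - (int n + 1) * Y + X"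
        using e b' a' by simp
      then show ?thesis using c by (simp add: algebra_simps)
    qed
    then show ?thesis unfolding X_def Y_def Z_def .
  next
    case False
    then have z: "Suc n choose Suc (2*s) = 0" "n choose (2*s) = 0" "n choose Suc (2*s) = 0"
      by auto
    show ?thesis unfolding z by simp
  qed
qed

lemma sum_pairs:
  fixes f :: "nat \<Rightarrow> int"
  shows "(\<Sum>s<m. f (Suc (2*s)) + f (2*s)) = (\<Sum>j<2*m. f j)"
  by (induction m) (simp_all add: algebra_simps)

lemma alt_sum:
  fixes p m :: nat
  shows "(\<Sum>s<Suc m. int (Suc p choose Suc (2*s)) - int (Suc p choose (2*s))) = int (p choose Suc (2*m))"
proof (induction m)
  case 0
  then show ?case by simp
next
  case (Suc m)
  have "(\<Sum>s<Suc (Suc m). int (Suc p choose Suc (2*s)) - int (Suc p choose (2*s)))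
     = int (p choose Suc (2*m)) + (int (Suc p choose Suc (2*Suc m)) - int (Suc p choose (2*Suc m)))"
    using Suc by simp
  also have "\<dots> = int (p choose Suc (2*Suc m))"
    by (simp add: numeral_eq_Suc)
  finally show ?case .
qed

lemma half_sum:
  fixes m :: nat
  shows "2 * (\<Sum>j<2*m. int ((4*m) choose j)) + int ((4*m) choose (2*m)) = 2 ^ (4*m)"
proof -
  have r: "(\<Sum>j\<in>{2*m<..4*m}. int ((4*m) choose j)) = (\<Sum>j<2*m. int ((4*m) choose j))"
    by (rule sum.reindex_bij_witness[of _ "\<lambda>j. 4*m - j" "\<lambda>j. 4*m - j"])
       (auto simp: binomial_symmetric[symmetric])
  have U: "{..4*m} = insert (2*m) ({..<2*m} \<union> {2*m<..4*m})" by auto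
  have V: "(\<Sum>j\<in>{..<2*m} \<union> {2*m<..4*m}. int ((4*m) choose j))
     = (\<Sum>j<2*m. int ((4*m) choose j)) + (\<Sum>j\<in>{2*m<..4*m}. int ((4*m) choose j))"
    by (rule sum.union_disjoint) auto
  have "(\<Sum>j\<le>4*m. int ((4*m) choose j))
      = (\<Sum>j<2*m. int ((4*m) choose j)) + int ((4*m) choose (2*m)) + (\<Sum>j\<in>{2*m<..4*m}. int ((4*m) choose j))"
    unfolding U using V by simp
  moreover have "(\<Sum>j\<le>4*m. int ((4*m) choose j)) = 2 ^ (4*m)"
    using choose_row_sum[of "4*m"] by (metis of_nat_numeral of_nat_power of_nat_sum)
  ultimately show ?thesis using r by simp
qed

theorem lemma8:
  fixes T :: nat
  assumes "T > 0" and "4 dvd T"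
  shows "(\<Sum>t=1..T div 4. (int T - 4 * (int t - 1)) * int ((T + 1) choose (2 * t - 1)))
         = 2 ^ (T - 1) + int (T div 2) * int (T choose (T div 2))"
proof -
  obtain m where Tm: "T = 4*m" using assms(2) by blast
  with assms(1) obtain m' where mm: "m = Suc m'" by (cases m) auto
  have shift: "\<And>g::nat\<Rightarrow>int. (\<Sum>t=1..k. g t) = (\<Sum>s<k. g (Suc s))" for k
    by (induction k) auto
  define p where "p = 4*m'+3"
  have Tp: "T = Suc p" using Tm mm p_def by simp
  have "(\<Sum>t=1..T div 4. (int T - 4 * (int t - 1)) * int ((T + 1) choose (2 * t - 1)))
      = (\<Sum>s<m. (int T - 4 * int s) * int (Suc T choose Suc (2*s)))"
    using shift Tm by simp
  also have "\<dots> = (\<Sum>s<m. int (T choose Suc (2*s)) + int (T choose (2*s)))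
      + (int T + 1) * (\<Sum>s<m. int (T choose Suc (2*s)) - int (T choose (2*s)))"
    by (simp only: term_id sum.distrib sum_distrib_left)
  also have "\<dots> = (\<Sum>j<2*m. int (T choose j)) + (int T + 1) * int (p choose Suc (2*m'))"
    using sum_pairs[of "\<lambda>j. int (T choose j)" m] alt_sum[of p m'] Tp mm by simp
  finally have S: "(\<Sum>t=1..T div 4. (int T - 4 * (int t - 1)) * int ((T + 1) choose (2 * t - 1)))
      = (\<Sum>j<2*m. int (T choose j)) + (int T + 1) * int (p choose Suc (2*m'))" .
  have H: "2 * (\<Sum>j<2*m. int (T choose j)) + int (T choose (2*m)) = 2 ^ T"
    using half_sum[of m] Tm by simp
  have sym: "p choose Suc (Suc (2*m')) = p choose Suc (2*m')"
    using binomial_symmetric[of "Suc (Suc (2*m'))" p] p_def by (simp add: numeral_eq_Suc)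
  have C: "T choose (2*m) = 2 * (p choose Suc (2*m'))"
    using Tp mm sym by simp
  have P: "(2::int) ^ T = 2 * 2 ^ (T - 1)" using Tp by simp
  have D: "T div 2 = 2*m" using Tm by simp
  show ?thesis unfolding S D using H C P Tm by (simp add: algebra_simps)
qed

end
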